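(* For all $\nu_1,\nu_2\in\mathscr{P}_{\mathbb{T}^2}$, $$m_{1,1}(\nu_1\boxtimes\boxtimes\nu_2)=m_{1,1}(\nu_1)\,m_{1,1}(\nu_2)\quad\text{and}\quad m_{1,-1}(\nu_1\boxtimes\boxtimes^{\mathrm{op}}\nu_2)=m_{1,-1}(\nu_1)\,m_{1,-1}(\nu_2).$$
   Context: For $\nu\in\mathscr{P}_{\mathbb{T}^2}$ (Borel probability measures on $\mathbb{T}^2$) and $(p,q)\in\mathbb{Z}^2$, $m_{p,q}(\nu)=\int_{\mathbb{T}^2}s_1^ps_2^q\,d\nu(s_1,s_2)$. The distribution of a pair $(u,v)$ of commuting unitaries in a $C^*$-probability space $(\mathcal{A},\varphi)$ is the $\nu\in\mathscr{P}_{\mathbb{T}^2}$ with $m_{p,q}(\nu)=\varphi(u^pv^q)$ for all $p,q$. The bi-free multiplicative convolution $\nu_1\boxtimes\boxtimes\nu_2$ is the distribution of $(u_1u_2,v_1v_2)$, where $(u_1,v_1),(u_2,v_2)$ are bi-free (Voiculescu) bipartite pairs of unitaries (each $u_i$ commutes with each $v_j$) with distributions $\nu_1,\nu_2$. $\nu^\star$ denotes the push-forward of $\nu$ under $(s_1,s_2)\mapsto(s_1,1/s_2)$, and $\nu_1\boxtimes\boxtimes^{\mathrm{op}}\nu_2:=(\nu_1^\star\boxtimes\boxtimes\nu_2^\star)^\star$. *)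

theory Defs
  imports "HOL-Probability.Probability"
begin

text \<open>The scalar action of the complex numbers is given by a central unital
ring homomorphism sc from the complex numbers into the ring; adj is the involution.\<close>

definition star_prob_space ::
  "(complex \<Rightarrow> 'a::ring_1) \<Rightarrow> ('a \<Rightarrow> 'a) \<Rightarrow> ('a \<Rightarrow> complex) \<Rightarrow> bool" where
  "star_prob_space sc adj \<phi> \<longleftrightarrow>
     (\<forall>c d. sc (c + d) = sc c + sc d) \<and> (\<forall>c d. sc (c * d) = sc c * sc d) \<and> sc 1 = 1 \<and>
     (\<forall>c a. sc c * a = a * sc c) \<and>
     (\<forall>a b. adj (a + b) = adj a + adj b) \<and> (\<forall>a b. adj (a * b) = adj b * adj a) \<and>
     (\<forall>a. adj (adj a) = a) \<and> (\<forall>c. adj (sc c) = sc (cnj c)) \<and>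
     (\<forall>a b. \<phi> (a + b) = \<phi> a + \<phi> b) \<and> (\<forall>c a. \<phi> (sc c * a) = c * \<phi> a) \<and> \<phi> 1 = 1 \<and>
     (\<forall>a. \<phi> (adj a * a) \<in> \<real> \<and> Re (\<phi> (adj a * a)) \<ge> 0)"

definition unitary_el :: "('a::ring_1 \<Rightarrow> 'a) \<Rightarrow> 'a \<Rightarrow> bool" where
  "unitary_el adj u \<longleftrightarrow> adj u * u = 1 \<and> u * adj u = 1"

definition upow :: "('a::ring_1 \<Rightarrow> 'a) \<Rightarrow> 'a \<Rightarrow> int \<Rightarrow> 'a" where
  "upow adj u p = (if p \<ge> 0 then u ^ nat p else adj u ^ nat (- p))"

inductive_set star_alg :: "(complex \<Rightarrow> 'a::ring_1) \<Rightarrow> ('a \<Rightarrow> 'a) \<Rightarrow> 'a set \<Rightarrow> 'a set"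
  for sc adj G where
  gen: "x \<in> G \<Longrightarrow> x \<in> star_alg sc adj G"
| scal: "sc c \<in> star_alg sc adj G"
| add: "x \<in> star_alg sc adj G \<Longrightarrow> y \<in> star_alg sc adj G \<Longrightarrow> x + y \<in> star_alg sc adj G"
| mult: "x \<in> star_alg sc adj G \<Longrightarrow> y \<in> star_alg sc adj G \<Longrightarrow> x * y \<in> star_alg sc adj G"
| star: "x \<in> star_alg sc adj G \<Longrightarrow> adj x \<in> star_alg sc adj G"

text \<open>A vector space with specified state vector is modelled (up to isomorphism)
as the space of finitely supported functions on a basis S with a distinguished basis
element s: the state vector is the indicator of s and the complement space is spanned
by the remaining basis vectors.\<close>

definition finsupp :: "'b set \<Rightarrow> ('b \<Rightarrow> complex) \<Rightarrow> bool" where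
  "finsupp S x \<longleftrightarrow> finite {t. x t \<noteq> 0} \<and> {t. x t \<noteq> 0} \<subseteq> S"

definition ev :: "'b \<Rightarrow> 'b \<Rightarrow> complex" where
  "ev t = (\<lambda>t'. if t' = t then 1 else 0)"

definition lin_op :: "'b set \<Rightarrow> (('b \<Rightarrow> complex) \<Rightarrow> ('b \<Rightarrow> complex)) \<Rightarrow> bool" where
  "lin_op S T \<longleftrightarrow> (\<forall>x. finsupp S x \<longrightarrow> finsupp S (T x)) \<and>
     (\<forall>x y. finsupp S x \<longrightarrow> finsupp S y \<longrightarrow> T (\<lambda>t. x t + y t) = (\<lambda>t. T x t + T y t)) \<and>
     (\<forall>c x. finsupp S x \<longrightarrow> T (\<lambda>t. c * x t) = (\<lambda>t. c * T x t))"

definition unital_hom ::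
  "'b set \<Rightarrow> (complex \<Rightarrow> 'a::ring_1) \<Rightarrow> 'a set \<Rightarrow> ('a \<Rightarrow> ('b \<Rightarrow> complex) \<Rightarrow> ('b \<Rightarrow> complex)) \<Rightarrow> bool" where
  "unital_hom S sc B l \<longleftrightarrow>
     (\<forall>a\<in>B. lin_op S (l a)) \<and>
     (\<forall>x. finsupp S x \<longrightarrow> l 1 x = x) \<and>
     (\<forall>a\<in>B. \<forall>b\<in>B. \<forall>x. finsupp S x \<longrightarrow>
         l (a * b) x = l a (l b x) \<and> l (a + b) x = (\<lambda>t. l a x t + l b x t)) \<and>
     (\<forall>c. \<forall>a\<in>B. \<forall>x. finsupp S x \<longrightarrow> l (sc c * a) x = (\<lambda>t. c * l a x t))"

text \<open>The free product space has as basis the reduced words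
(i1,t1)...(in,tn) with consecutive indices distinct and each tk a non-distinguished
basis element of the ik-th space; the empty word is the state vector.\<close>

type_synonym ('i, 'b) fvec = "('i \<times> 'b) list \<Rightarrow> complex"

definition expand :: "(('b \<Rightarrow> complex)) \<Rightarrow> ('b \<Rightarrow> ('i \<times> 'b) list) \<Rightarrow> ('i, 'b) fvec" where
  "expand y j = (\<lambda>w''. \<Sum>t'\<in>{t. y t \<noteq> 0}. if w'' = j t' then y t' else 0)"

text \<open>Left regular action lambda_i(T): identifies X with X_i tensor X(l,i).\<close>
definition lam_e :: "('i \<Rightarrow> 'b) \<Rightarrow> 'i \<Rightarrow> (('b \<Rightarrow> complex) \<Rightarrow> ('b \<Rightarrow> complex)) \<Rightarrow> ('i \<times> 'b) list \<Rightarrow> ('i, 'b) fvec" where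
  "lam_e s i T w =
     (case w of
        (j, t) # w' \<Rightarrow>
          (if j = i then expand (T (ev t)) (\<lambda>t'. if t' = s i then w' else (i, t') # w')
           else expand (T (ev (s i))) (\<lambda>t'. if t' = s i then w else (i, t') # w))
      | [] \<Rightarrow> expand (T (ev (s i))) (\<lambda>t'. if t' = s i then w else (i, t') # w))"

definition lam :: "('i \<Rightarrow> 'b) \<Rightarrow> 'i \<Rightarrow> (('b \<Rightarrow> complex) \<Rightarrow> ('b \<Rightarrow> complex)) \<Rightarrow> ('i, 'b) fvec \<Rightarrow> ('i, 'b) fvec" where
  "lam s i T x = (\<lambda>w''. \<Sum>w\<in>{w. x w \<noteq> 0}. x w * lam_e s i T w w'')"

text \<open>Right regular action rho_i(T): identifies X with X(r,i) tensor X_i.\<close>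
definition rho_e :: "('i \<Rightarrow> 'b) \<Rightarrow> 'i \<Rightarrow> (('b \<Rightarrow> complex) \<Rightarrow> ('b \<Rightarrow> complex)) \<Rightarrow> ('i \<times> 'b) list \<Rightarrow> ('i, 'b) fvec" where
  "rho_e s i T w =
     (if w \<noteq> [] \<and> fst (last w) = i
      then expand (T (ev (snd (last w))))
             (\<lambda>t'. if t' = s i then butlast w else butlast w @ [(i, t')])
      else expand (T (ev (s i))) (\<lambda>t'. if t' = s i then w else w @ [(i, t')]))"

definition rho :: "('i \<Rightarrow> 'b) \<Rightarrow> 'i \<Rightarrow> (('b \<Rightarrow> complex) \<Rightarrow> ('b \<Rightarrow> complex)) \<Rightarrow> ('i, 'b) fvec \<Rightarrow> ('i, 'b) fvec" where
  "rho s i T x = (\<lambda>w''. \<Sum>w\<in>{w. x w \<noteq> 0}. x w * rho_e s i T w w'')"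

text \<open>The family of pairs of faces (B i, C i), i in I, is bi-free in (A, phi) if there
are vector spaces with specified state vectors (here with bases in the type 'b) and
unital homomorphisms l i, r i of B i, C i into their linear operators such that the
two-faced family (lambda_i(l_i(B i)), rho_i(r_i(C i))) on the free product, with
the vacuum state, has the same joint distribution as ((B i, C i)) in (A, phi).
A letter (True, i, a) means a is taken in the left face B i, (False, i, a) in C i.\<close>

definition bi_free ::
  "'b itself \<Rightarrow> (complex \<Rightarrow> 'a::ring_1) \<Rightarrow> ('a \<Rightarrow> complex) \<Rightarrow> 'i set \<Rightarrow> ('i \<Rightarrow> 'a set) \<Rightarrow> ('i \<Rightarrow> 'a set) \<Rightarrow> bool" where
  "bi_free (TB :: 'b itself) sc \<phi> I B C \<longleftrightarrow>
     (\<exists>(S :: 'i \<Rightarrow> 'b set) s l r.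
        (\<forall>i\<in>I. s i \<in> S i \<and> unital_hom (S i) sc (B i) (l i) \<and> unital_hom (S i) sc (C i) (r i)) \<and>
        (\<forall>ws :: (bool \<times> 'i \<times> 'a) list.
           (\<forall>(lf, i, a)\<in>set ws. i \<in> I \<and> a \<in> (if lf then B i else C i)) \<longrightarrow>
           \<phi> (prod_list (map (\<lambda>(lf, i, a). a) ws)) =
           foldr (\<lambda>(lf, i, a) x. if lf then lam s i (l i a) x else rho s i (r i a) x) ws (ev []) []))"

definition T2 :: "(complex \<times> complex) set" where
  "T2 = {(z, w). cmod z = 1 \<and> cmod w = 1}"

definition PT2 :: "(complex \<times> complex) measure \<Rightarrow> bool" where
  "PT2 \<nu> \<longleftrightarrow> prob_space \<nu> \<and> sets \<nu> = sets (restrict_space borel T2)"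

definition mom :: "int \<Rightarrow> int \<Rightarrow> (complex \<times> complex) measure \<Rightarrow> complex" where
  "mom p q \<nu> = (\<integral>z. (fst z) powi p * (snd z) powi q \<partial>\<nu>)"

definition distribution_of ::
  "('a::ring_1 \<Rightarrow> 'a) \<Rightarrow> ('a \<Rightarrow> complex) \<Rightarrow> 'a \<Rightarrow> 'a \<Rightarrow> (complex \<times> complex) measure \<Rightarrow> bool" where
  "distribution_of adj \<phi> u v \<nu> \<longleftrightarrow>
     PT2 \<nu> \<and> (\<forall>p q. mom p q \<nu> = \<phi> (upow adj u p * upow adj v q))"

definition star_meas :: "(complex \<times> complex) measure \<Rightarrow> (complex \<times> complex) measure" where
  "star_meas \<nu> = distr \<nu> \<nu> (\<lambda>(z, w). (z, inverse w))"

text \<open>bfmc_realizes TA TB nu1 nu2 nu: nu is the distribution of (u1 u2, v1 v2) for some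
bi-free bipartite pairs (u1, v1), (u2, v2) of commuting unitaries in a *-probability space
(on the type 'a, with free-product realization having bases in the type 'b) whose
distributions are nu1 and nu2; i.e. nu = nu1 boxtimes-boxtimes nu2.\<close>

definition bfmc_realizes ::
  "'a::ring_1 itself \<Rightarrow> 'b itself \<Rightarrow> (complex \<times> complex) measure \<Rightarrow> (complex \<times> complex) measure
     \<Rightarrow> (complex \<times> complex) measure \<Rightarrow> bool" where
  "bfmc_realizes TA TB \<nu>1 \<nu>2 \<nu> \<longleftrightarrow>
     (\<exists>(sc :: complex \<Rightarrow> 'a) adj \<phi> u1 v1 u2 v2.
        star_prob_space sc adj \<phi> \<and>
        unitary_el adj u1 \<and> unitary_el adj v1 \<and> unitary_el adj u2 \<and> unitary_el adj v2 \<and>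
        (\<forall>x\<in>{u1, u2}. \<forall>y\<in>{v1, v2}. x * y = y * x) \<and>
        distribution_of adj \<phi> u1 v1 \<nu>1 \<and> distribution_of adj \<phi> u2 v2 \<nu>2 \<and>
        bi_free TB sc \<phi> {1::nat, 2}
          (\<lambda>i. star_alg sc adj {if i = 1 then u1 else u2})
          (\<lambda>i. star_alg sc adj {if i = 1 then v1 else v2}) \<and>
        distribution_of adj \<phi> (u1 * u2) (v1 * v2) \<nu>)"

end

theory Submission
  imports Defs
begin

definition fz :: "('b \<Rightarrow> complex) \<Rightarrow> 'b \<Rightarrow> complex" where
  "fz f = (if finite {t. f t \<noteq> 0} then f else (\<lambda>_. 0))"

lemma fz_fin: "finite {t. fz f t \<noteq> 0}"
  unfolding fz_def by auto

lemma expand_hit: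
  assumes "inj j" shows "expand y j (j t) = fz y t"
proof (cases "finite {t. y t \<noteq> 0}")
  case True
  have "expand y j (j t) = (\<Sum>t'\<in>{t. y t \<noteq> 0}. if t' = t then y t' else 0)"
    unfolding expand_def using assms by (intro sum.cong) (auto dest: injD)
  also have "\<dots> = y t" using True by (simp add: sum.delta')
  finally show ?thesis using True by (simp add: fz_def)
next
  case False then show ?thesis by (simp add: expand_def fz_def)
qed

lemma expand_miss: "(\<And>t. j t \<noteq> u) \<Longrightarrow> expand y j u = 0"
  unfolding expand_def by (intro sum.neutral) auto

lemma expand_nz: "expand y j u \<noteq> 0 \<Longrightarrow> \<exists>t. u = j t \<and> y t \<noteq> 0"
proof -
  assume "expand y j u \<noteq> 0"
  then have "(\<Sum>t'\<in>{t. y t \<noteq> 0}. if u = j t' then y t' else 0) \<noteq> 0" by (simp add: expand_def)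
  then obtain t where "t \<in> {t. y t \<noteq> 0}" "(if u = j t then y t else 0) \<noteq> 0"
    by (rule sum.not_neutral_contains_not_neutral)
  then show ?thesis by (auto split: if_splits)
qed

lemma expand_fin: "finite {u. expand y j u \<noteq> 0}"
proof (cases "finite {t. y t \<noteq> 0}")
  case True
  have "{u. expand y j u \<noteq> 0} \<subseteq> j ` {t. y t \<noteq> 0}" using expand_nz by blast
  then show ?thesis using True finite_subset by blast
next
  case False then show ?thesis by (simp add: expand_def)
qed

lemma lam_e_fin: "finite {u. lam_e s i T w u \<noteq> 0}"
  unfolding lam_e_def by (cases w) (auto simp: expand_fin split: prod.split)

lemma rho_e_fin: "finite {u. rho_e s i T w u \<noteq> 0}"
  unfolding rho_e_def by (auto simp: expand_fin)

lemma sum_fun_fin: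
  fixes x :: "'w \<Rightarrow> complex" and L :: "'w \<Rightarrow> 'u \<Rightarrow> complex"
  assumes "\<And>w. finite {u. L w u \<noteq> 0}"
  shows "finite {u. (\<Sum>w\<in>{w. x w \<noteq> 0}. x w * L w u) \<noteq> 0}"
proof (cases "finite {w. x w \<noteq> (0::complex)}")
  case True
  have "{u. (\<Sum>w\<in>{w. x w \<noteq> 0}. x w * L w u) \<noteq> 0} \<subseteq> (\<Union>w\<in>{w. x w \<noteq> 0}. {u. L w u \<noteq> 0})"
  proof
    fix u assume "u \<in> {u. (\<Sum>w\<in>{w. x w \<noteq> 0}. x w * L w u) \<noteq> 0}"
    then have "(\<Sum>w\<in>{w. x w \<noteq> 0}. x w * L w u) \<noteq> 0" by simp
    then obtain w where "w \<in> {w. x w \<noteq> 0}" "x w * L w u \<noteq> 0"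
      by (rule sum.not_neutral_contains_not_neutral)
    then show "u \<in> (\<Union>w\<in>{w. x w \<noteq> 0}. {u. L w u \<noteq> 0})" by auto
  qed
  then show ?thesis using True assms finite_subset by blast
next
  case False then show ?thesis by simp
qed

lemma lam_fin: "finite {u. lam s i T x u \<noteq> 0}"
  unfolding lam_def by (rule sum_fun_fin[OF lam_e_fin])

lemma rho_fin: "finite {u. rho s i T x u \<noteq> 0}"
  unfolding rho_def by (rule sum_fun_fin[OF rho_e_fin])

lemma sum_super:
  fixes x :: "'w \<Rightarrow> complex"
  assumes "finite W" "{w. x w \<noteq> 0} \<subseteq> W"
  shows "(\<Sum>w\<in>{w. x w \<noteq> 0}. x w * L w) = (\<Sum>w\<in>W. x w * (L w :: complex))"
  using assms by (intro sum.mono_neutral_left) auto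


lemma lam_e_annih:
  assumes v: "v = [] \<or> fst (hd v) \<noteq> i"
  shows "lam_e s i T w v = (if w = v then fz (T (ev (s i))) (s i) else 0) +
     (if w \<noteq> [] \<and> fst (hd w) = i \<and> tl w = v then fz (T (ev (snd (hd w)))) (s i) else 0)"
proof (cases w)
  case Nil
  let ?j = "\<lambda>t'. if t' = s i then [] else [(i, t')]"
  have inj: "inj ?j" by (auto intro!: injI split: if_splits)
  show ?thesis
  proof (cases "v = []")
    case True
    then show ?thesis using Nil expand_hit[OF inj, of "T (ev (s i))" "s i"]
      by (simp add: lam_e_def)
  next
    case False
    then have "expand (T (ev (s i))) ?j v = 0" using v by (intro expand_miss) auto
    then show ?thesis using Nil False by (simp add: lam_e_def)
  qed
next
  case (Cons a w')
  obtain k t where a: "a = (k, t)" by (cases a)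
  show ?thesis
  proof (cases "k = i")
    case True
    let ?j = "\<lambda>t'. if t' = s i then w' else (i, t') # w'"
    have inj: "inj ?j" by (rule injI) (auto split: if_splits)
    show ?thesis
    proof (cases "w' = v")
      case True
      then show ?thesis using Cons a \<open>k = i\<close> expand_hit[OF inj, of "T (ev t)" "s i"] v
        by (auto simp: lam_e_def)
    next
      case False
      then have "expand (T (ev t)) ?j v = 0" using v by (intro expand_miss) auto
      then show ?thesis using Cons a \<open>k = i\<close> False v by (auto simp: lam_e_def)
    qed
  next
    case False
    let ?j = "\<lambda>t'. if t' = s i then w else (i, t') # w"
    have inj: "inj ?j" by (rule injI) (auto split: if_splits)
    show ?thesis
    proof (cases "w = v")
      case True
      then show ?thesis using Cons a False expand_hit[OF inj, of "T (ev (s i))" "s i"] v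
        by (auto simp: lam_e_def)
    next
      case ne: False
      then have "expand (T (ev (s i))) ?j v = 0" using v by (intro expand_miss) auto
      then show ?thesis using Cons a False ne by (auto simp: lam_e_def)
    qed
  qed
qed

lemma lam_annih:
  assumes fin: "finite {w. y w \<noteq> 0}" and v: "v = [] \<or> fst (hd v) \<noteq> i"
    and F: "finite F" and van: "\<And>t. t \<notin> F \<Longrightarrow> y ((i, t) # v) = 0"
  shows "lam s i T y v = y v * fz (T (ev (s i))) (s i) + (\<Sum>t\<in>F. y ((i, t) # v) * fz (T (ev t)) (s i))"
proof -
  let ?a = "fz (T (ev (s i))) (s i)"
  let ?g = "\<lambda>w. y w * fz (T (ev (snd (hd w)))) (s i)"
  let ?G = "(\<lambda>t. (i, t) # v) ` F"
  let ?W = "{w. y w \<noteq> 0} \<union> {v} \<union> ?G"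
  have W: "finite ?W" using fin F by auto
  have "lam s i T y v = (\<Sum>w\<in>?W. y w * lam_e s i T w v)"
    unfolding lam_def by (rule sum_super[OF W]) auto
  also have "\<dots> = (\<Sum>w\<in>?W. (if w = v then y v * ?a else 0) + (if w \<in> ?G then ?g w else 0))"
  proof (rule sum.cong[OF refl])
    fix w assume "w \<in> ?W"
    show "y w * lam_e s i T w v = (if w = v then y v * ?a else 0) + (if w \<in> ?G then ?g w else 0)"
    proof (cases "w \<noteq> [] \<and> fst (hd w) = i \<and> tl w = v")
      case True
      then obtain t where w: "w = (i, t) # v" by (cases w) auto
      then have ne: "w \<noteq> v" by auto
      show ?thesis
      proof (cases "t \<in> F")
        case True
        then have "w \<in> ?G" using w by auto
        then show ?thesis using ne w by (simp add: lam_e_annih[OF v])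
      next
        case False
        then have "y w = 0" using van w by auto
        moreover have "w \<notin> ?G" using w False by auto
        ultimately show ?thesis using ne by simp
      qed
    next
      case False
      then have "w \<notin> ?G" by auto
      then show ?thesis using False by (auto simp: lam_e_annih[OF v])
    qed
  qed
  also have "\<dots> = y v * ?a + (\<Sum>w\<in>?W. if w \<in> ?G then ?g w else 0)"
    using W by (simp add: sum.distrib sum.delta')
  also have "(\<Sum>w\<in>?W. if w \<in> ?G then ?g w else 0) = sum ?g (?W \<inter> ?G)"
    using W by (simp add: sum.inter_restrict)
  also have "?W \<inter> ?G = ?G" by blast
  also have "sum ?g ?G = (\<Sum>t\<in>F. y ((i, t) # v) * fz (T (ev t)) (s i))"
    by (subst sum.reindex) (auto intro: inj_onI)
  finally show ?thesis .
qed

definition nei :: "'i \<Rightarrow> ('i \<times> 'b) list \<Rightarrow> bool" where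
  "nei i w \<longleftrightarrow> w = [] \<or> fst (last w) \<noteq> i"

lemma rho_e_nei: "nei i w \<Longrightarrow>
  rho_e s i T w = expand (T (ev (s i))) (\<lambda>t'. if t' = s i then w else w @ [(i, t')])"
  unfolding rho_e_def nei_def by auto

lemma inj_app: "inj (\<lambda>t'. if t' = a then w else w @ [(i, t')])"
  by (rule injI) (auto split: if_splits)

lemma rho_e_annih:
  assumes "nei i w" "nei i v"
  shows "rho_e s i T w v = (if w = v then fz (T (ev (s i))) (s i) else 0)"
proof (cases "w = v")
  case True
  then show ?thesis using assms expand_hit[OF inj_app[of "s i" w i], where y="T (ev (s i))" and t="s i"]
    by (auto simp: rho_e_nei)
next
  case False
  have "expand (T (ev (s i))) (\<lambda>t'. if t' = s i then w else w @ [(i, t')]) v = 0"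
    using False assms(2) by (intro expand_miss) (auto simp: nei_def)
  then show ?thesis using False assms by (simp add: rho_e_nei)
qed

lemma rho_e_create:
  assumes "nei i w" "nei i v"
  shows "rho_e s i T w (v @ [(i, t)]) = (if w = v \<and> t \<noteq> s i then fz (T (ev (s i))) t else 0)"
proof (cases "w = v \<and> t \<noteq> s i")
  case True
  then show ?thesis using assms expand_hit[OF inj_app[of "s i" w i], where y="T (ev (s i))" and t=t]
    by (auto simp: rho_e_nei)
next
  case False
  have "expand (T (ev (s i))) (\<lambda>t'. if t' = s i then w else w @ [(i, t')]) (v @ [(i, t)]) = 0"
    using False assms(1) by (intro expand_miss) (auto simp: nei_def)
  then show ?thesis using False assms by (auto simp: rho_e_nei)
qed

lemma rho_annih:
  assumes fin: "finite {w. y w \<noteq> 0}" and ne: "\<And>w. y w \<noteq> 0 \<Longrightarrow> nei i w" and v: "nei i v"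
  shows "rho s i T y v = y v * fz (T (ev (s i))) (s i)"
proof -
  let ?W = "{w. y w \<noteq> 0} \<union> {v}"
  have W: "finite ?W" using fin by auto
  have "rho s i T y v = (\<Sum>w\<in>?W. y w * rho_e s i T w v)"
    unfolding rho_def by (rule sum_super[OF W]) auto
  also have "\<dots> = (\<Sum>w\<in>?W. if w = v then y v * fz (T (ev (s i))) (s i) else 0)"
  proof (rule sum.cong[OF refl])
    fix w assume "w \<in> ?W"
    then have "nei i w" using ne v by auto
    then show "y w * rho_e s i T w v = (if w = v then y v * fz (T (ev (s i))) (s i) else 0)"
      using v by (simp add: rho_e_annih)
  qed
  also have "\<dots> = y v * fz (T (ev (s i))) (s i)" using W by (simp add: sum.delta')
  finally show ?thesis .
qed

lemma rho_create:
  assumes fin: "finite {w. y w \<noteq> 0}" and ne: "\<And>w. y w \<noteq> 0 \<Longrightarrow> nei i w" and v: "nei i v"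
  shows "rho s i T y (v @ [(i, t)]) = (if t \<noteq> s i then y v * fz (T (ev (s i))) t else 0)"
proof -
  let ?W = "{w. y w \<noteq> 0} \<union> {v}"
  have W: "finite ?W" using fin by auto
  have "rho s i T y (v @ [(i, t)]) = (\<Sum>w\<in>?W. y w * rho_e s i T w (v @ [(i, t)]))"
    unfolding rho_def by (rule sum_super[OF W]) auto
  also have "\<dots> = (\<Sum>w\<in>?W. if w = v then (if t \<noteq> s i then y v * fz (T (ev (s i))) t else 0) else 0)"
  proof (rule sum.cong[OF refl])
    fix w assume "w \<in> ?W"
    then have "nei i w" using ne v by auto
    then show "y w * rho_e s i T w (v @ [(i, t)]) = (if w = v then (if t \<noteq> s i then y v * fz (T (ev (s i))) t else 0) else 0)"
      using v by (simp add: rho_e_create)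
  qed
  also have "\<dots> = (if t \<noteq> s i then y v * fz (T (ev (s i))) t else 0)" using W by (simp add: sum.delta')
  finally show ?thesis .
qed

lemma rho_supp:
  assumes ne: "\<And>w. y w \<noteq> 0 \<Longrightarrow> nei i w" and nz: "rho s i T y u \<noteq> 0"
  shows "\<exists>w. y w \<noteq> 0 \<and> (u = w \<or> (\<exists>t. u = w @ [(i, t)]))"
proof -
  from nz have "(\<Sum>w\<in>{w. y w \<noteq> 0}. y w * rho_e s i T w u) \<noteq> 0" by (simp add: rho_def)
  then obtain w where w: "w \<in> {w. y w \<noteq> 0}" "y w * rho_e s i T w u \<noteq> 0"
    by (rule sum.not_neutral_contains_not_neutral)
  then have "expand (T (ev (s i))) (\<lambda>t'. if t' = s i then w else w @ [(i, t')]) u \<noteq> 0"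
    using ne by (simp add: rho_e_nei)
  then obtain t where "u = (if t = s i then w else w @ [(i, t)])" using expand_nz by blast
  then show ?thesis using w by (auto split: if_splits)
qed

lemma main_comp:
  fixes s :: "nat \<Rightarrow> 'b" and A B C D :: "('b \<Rightarrow> complex) \<Rightarrow> ('b \<Rightarrow> complex)"
  shows "lam s 1 A (lam s 2 C (rho s 1 B (rho s 2 D (ev [])))) [] =
         lam s 1 A (rho s 1 B (ev [])) [] * lam s 2 C (rho s 2 D (ev [])) []"
proof -
  define Om :: "(nat \<times> 'b) list \<Rightarrow> complex" where "Om = ev []"
  have "{w. Om w \<noteq> 0} = {[]}" by (auto simp: Om_def ev_def)
  then have Om_fin: "finite {w. Om w \<noteq> 0}" by simp
  have Om_ne: "\<And>i w. Om w \<noteq> 0 \<Longrightarrow> nei i w" by (simp add: Om_def ev_def nei_def split: if_splits)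
  have Om0: "Om [] = 1" by (simp add: Om_def ev_def)
  define Dv where "Dv = fz (D (ev (s 2)))"
  define Bv where "Bv = fz (B (ev (s 1)))"
  define F1 where "F1 = {t. Bv t \<noteq> 0}"
  define F2 where "F2 = {t. Dv t \<noteq> 0}"
  have F1: "finite F1" unfolding F1_def Bv_def by (rule fz_fin)
  have F2: "finite F2" unfolding F2_def Dv_def by (rule fz_fin)
  define c where "c = fz (C (ev (s 2))) (s 2)"
  define gC where "gC = (\<lambda>t. fz (C (ev t)) (s 2))"
  define a where "a = fz (A (ev (s 1))) (s 1)"
  define gA where "gA = (\<lambda>t. fz (A (ev t)) (s 1))"
  define z where "z = rho s 2 D Om"
  have z_fin: "finite {w. z w \<noteq> 0}" unfolding z_def by (rule rho_fin)
  have z0: "z [] = Dv (s 2)"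
    using rho_annih[of Om 2 "[]" s D, OF Om_fin Om_ne] by (simp add: z_def Dv_def nei_def Om0)
  have z1: "z [(2, t)] = (if t \<noteq> s 2 then Dv t else 0)" for t
    using rho_create[of Om 2 "[]" s D t, OF Om_fin Om_ne] by (simp add: z_def Dv_def nei_def Om0)
  have z_ne: "nei 1 w" if "z w \<noteq> 0" for w
  proof -
    from rho_supp[OF Om_ne that[unfolded z_def]] obtain w0 where
      "Om w0 \<noteq> 0" "w = w0 \<or> (\<exists>t. w = w0 @ [(2, t)])" by blast
    moreover from \<open>Om w0 \<noteq> 0\<close> have "w0 = []" by (simp add: Om_def ev_def split: if_splits)
    ultimately show ?thesis by (auto simp: nei_def)
  qed
  have zvan: "z [(2, t)] = 0" if "t \<notin> F2" for t using that z1 by (simp add: F2_def)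
  define y where "y = rho s 1 B z"
  have y_fin: "finite {w. y w \<noteq> 0}" unfolding y_def by (rule rho_fin)
  have y0: "y [] = Dv (s 2) * Bv (s 1)"
    using rho_annih[of z 1 "[]" s B, OF z_fin z_ne] by (simp add: y_def Bv_def nei_def z0)
  have y2: "y [(2, t)] = z [(2, t)] * Bv (s 1)" for t
    using rho_annih[of z 1 "[(2, t)]" s B, OF z_fin z_ne] by (simp add: y_def Bv_def nei_def)
  have y1: "y [(1, t)] = (if t \<noteq> s 1 then Dv (s 2) * Bv t else 0)" for t
    using rho_create[of z 1 "[]" s B t, OF z_fin z_ne] by (simp add: y_def Bv_def nei_def z0)
  have y21: "y [(2, t2), (1, t)] = (if t \<noteq> s 1 then z [(2, t2)] * Bv t else 0)" for t2 t
    using rho_create[of z 1 "[(2, t2)]" s B t, OF z_fin z_ne] by (simp add: y_def Bv_def nei_def)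
  define P2 where "P2 = z [] * c + (\<Sum>t\<in>F2. z [(2, t)] * gC t)"
  define x where "x = lam s 2 C y"
  have x_fin: "finite {w. x w \<noteq> 0}" unfolding x_def by (rule lam_fin)
  have "x [] = y [] * c + (\<Sum>t\<in>F2. y [(2, t)] * gC t)"
    unfolding x_def c_def gC_def
    by (rule lam_annih[OF y_fin _ F2]) (auto simp: y2 zvan)
  also have "\<dots> = Bv (s 1) * P2"
    by (simp add: P2_def y0 y2 z0 sum_distrib_left algebra_simps)
  finally have x0: "x [] = Bv (s 1) * P2" .
  have x1: "x [(1, t)] = (if t \<noteq> s 1 then Bv t else 0) * P2" for t
  proof -
    have "x [(1, t)] = y [(1, t)] * c + (\<Sum>t2\<in>F2. y [(2, t2), (1, t)] * gC t2)"
      unfolding x_def c_def gC_def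
      by (rule lam_annih[OF y_fin _ F2]) (use y21 zvan in auto)
    also have "\<dots> = (if t \<noteq> s 1 then Dv (s 2) * Bv t else 0) * c +
        (\<Sum>t2\<in>F2. (if t \<noteq> s 1 then z [(2, t2)] * Bv t else 0) * gC t2)"
      by (simp only: y1 y21)
    also have "\<dots> = (if t \<noteq> s 1 then Bv t else 0) * P2"
      by (cases "t = s 1") (simp_all add: P2_def z0 sum_distrib_left algebra_simps)
    finally show ?thesis .
  qed
  have "lam s 1 A x [] = x [] * a + (\<Sum>t\<in>F1. x [(1, t)] * gA t)"
    unfolding a_def gA_def
    by (rule lam_annih[OF x_fin _ F1]) (use x1 in \<open>auto simp: F1_def\<close>)
  also have "\<dots> = P2 * (Bv (s 1) * a + (\<Sum>t\<in>F1. (if t \<noteq> s 1 then Bv t else 0) * gA t))"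
    by (simp only: x0 x1) (simp add: sum_distrib_left algebra_simps)
  finally have L: "lam s 1 A x [] = P2 * (Bv (s 1) * a + (\<Sum>t\<in>F1. (if t \<noteq> s 1 then Bv t else 0) * gA t))" .
  define q where "q = rho s 1 B Om"
  have q_fin: "finite {w. q w \<noteq> 0}" unfolding q_def by (rule rho_fin)
  have q0: "q [] = Bv (s 1)"
    using rho_annih[of Om 1 "[]" s B, OF Om_fin Om_ne] by (simp add: q_def Bv_def nei_def Om0)
  have q1: "q [(1, t)] = (if t \<noteq> s 1 then Bv t else 0)" for t
    using rho_create[of Om 1 "[]" s B t, OF Om_fin Om_ne] by (simp add: q_def Bv_def nei_def Om0)
  have R1: "lam s 1 A q [] = Bv (s 1) * a + (\<Sum>t\<in>F1. (if t \<noteq> s 1 then Bv t else 0) * gA t)"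
    unfolding a_def gA_def q0[symmetric]
    by (subst lam_annih[OF q_fin _ F1]) (use q1 in \<open>auto simp: F1_def\<close>)
  have R2: "lam s 2 C z [] = P2"
    unfolding P2_def c_def gC_def
    by (rule lam_annih[OF z_fin _ F2]) (auto simp: zvan)
  show ?thesis using L R1 R2 by (simp add: x_def y_def z_def q_def Om_def)
qed

lemma bi_free_E:
  fixes TB :: "'b itself" and I :: "'i set"
  assumes "bi_free TB sc \<phi> I B C"
  obtains s :: "'i \<Rightarrow> 'b" and l r where
    "\<And>ws. (\<forall>(lf, i, a)\<in>set ws. i \<in> I \<and> a \<in> (if lf then B i else C i)) \<Longrightarrow>
       \<phi> (prod_list (map (\<lambda>(lf, i, a). a) ws)) =
       foldr (\<lambda>(lf, i, a) x. if lf then lam s i (l i a) x else rho s i (r i a) x) ws (ev []) []"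
proof -
  from assms obtain S :: "'i \<Rightarrow> 'b set" and s :: "'i \<Rightarrow> 'b" and l r where
    "\<forall>ws. (\<forall>(lf, i, a)\<in>set ws. i \<in> I \<and> a \<in> (if lf then B i else C i)) \<longrightarrow>
       \<phi> (prod_list (map (\<lambda>(lf, i, a). a) ws)) =
       foldr (\<lambda>(lf, i, a) x. if lf then lam s i (l i a) x else rho s i (r i a) x) ws (ev []) []"
    unfolding bi_free_def by blast
  then show ?thesis using that by blast
qed

lemma bfmc_mom11:
  fixes TA :: "'a::ring_1 itself" and TB :: "'b itself"
  assumes "bfmc_realizes TA TB n1 n2 n"
  shows "mom 1 1 n = mom 1 1 n1 * mom 1 1 n2"
proof -
  obtain sc :: "complex \<Rightarrow> 'a" and adj \<phi> u1 v1 u2 v2 where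
    d1: "distribution_of adj \<phi> u1 v1 n1" and d2: "distribution_of adj \<phi> u2 v2 n2" and
    bf: "bi_free TB sc \<phi> {1::nat, 2}
          (\<lambda>i. star_alg sc adj {if i = 1 then u1 else u2})
          (\<lambda>i. star_alg sc adj {if i = 1 then v1 else v2})" and
    d: "distribution_of adj \<phi> (u1 * u2) (v1 * v2) n"
    using assms unfolding bfmc_realizes_def by blast
  have m1: "mom 1 1 n1 = \<phi> (u1 * v1)" using d1 by (simp add: distribution_of_def upow_def)
  have m2: "mom 1 1 n2 = \<phi> (u2 * v2)" using d2 by (simp add: distribution_of_def upow_def)
  have m: "mom 1 1 n = \<phi> (u1 * (u2 * (v1 * v2)))" using d by (simp add: distribution_of_def upow_def mult.assoc)
  let ?B = "\<lambda>i::nat. star_alg sc adj {if i = 1 then u1 else u2}"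
  let ?C = "\<lambda>i::nat. star_alg sc adj {if i = 1 then v1 else v2}"
  obtain s :: "nat \<Rightarrow> 'b" and l r where
    H: "\<And>ws. (\<forall>(lf, i, a)\<in>set ws. i \<in> {1::nat, 2} \<and> a \<in> (if lf then ?B i else ?C i)) \<Longrightarrow>
           \<phi> (prod_list (map (\<lambda>(lf, i, a). a) ws)) =
           foldr (\<lambda>(lf, i, a) x. if lf then lam s i (l i a) x else rho s i (r i a) x) ws (ev []) []"
    using bi_free_E[OF bf] by blast
  have u1: "u1 \<in> ?B 1" and u2: "u2 \<in> ?B 2" and v1: "v1 \<in> ?C 1" and v2: "v2 \<in> ?C 2"
    by (auto intro: star_alg.gen)
  have e4: "\<phi> (u1 * (u2 * (v1 * v2))) =
      lam s 1 (l 1 u1) (lam s 2 (l 2 u2) (rho s 1 (r 1 v1) (rho s 2 (r 2 v2) (ev [])))) []"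
    using H[of "[(True, 1, u1), (True, 2, u2), (False, 1, v1), (False, 2, v2)]"] u1 u2 v1 v2 by simp
  have e1: "\<phi> (u1 * v1) = lam s 1 (l 1 u1) (rho s 1 (r 1 v1) (ev [])) []"
    using H[of "[(True, 1, u1), (False, 1, v1)]"] u1 v1 by simp
  have e2: "\<phi> (u2 * v2) = lam s 2 (l 2 u2) (rho s 2 (r 2 v2) (ev [])) []"
    using H[of "[(True, 2, u2), (False, 2, v2)]"] u2 v2 by simp
  show ?thesis using m m1 m2 e1 e2 e4 main_comp by metis
qed

lemma star_mom:
  assumes "PT2 \<nu>"
    and g0: "(\<lambda>z. fst z powi p * snd z powi q) \<in> borel_measurable (borel \<Otimes>\<^sub>M (borel :: complex measure))"
  shows "mom p q (star_meas \<nu>) = (\<integral>z. fst z powi p * (inverse (snd z)) powi q \<partial>\<nu>)"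
proof -
  have g: "(\<lambda>z. fst z powi p * snd z powi q) \<in> borel_measurable (borel :: (complex \<times> complex) measure)"
    using g0 unfolding borel_prod .
  have sets: "sets \<nu> = sets (restrict_space borel T2)" using assms by (simp add: PT2_def)
  have "(\<lambda>(z, w). (z, inverse w)) \<in> measurable (restrict_space borel T2) (restrict_space borel T2)"
  proof (rule measurable_restrict_space3)
    have "(\<lambda>(z::complex, w::complex). (z, inverse w)) \<in> measurable (borel \<Otimes>\<^sub>M borel) (borel \<Otimes>\<^sub>M (borel :: complex measure))"
      by measurable
    then show "(\<lambda>(z, w). (z, inverse w)) \<in> measurable borel (borel :: (complex \<times> complex) measure)"
      unfolding borel_prod .
    show "(\<lambda>(z, w). (z, inverse w)) \<in> T2 \<rightarrow> T2" by (auto simp: T2_def norm_inverse)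
  qed
  then have f: "(\<lambda>(z, w). (z, inverse w)) \<in> measurable \<nu> \<nu>"
    using measurable_cong_sets[OF sets sets] by simp
  have g': "(\<lambda>z. fst z powi p * snd z powi q) \<in> borel_measurable \<nu>"
    by (subst measurable_cong_sets[OF sets refl]) (rule measurable_restrict_space1[OF g])
  show ?thesis
    unfolding mom_def star_meas_def
    by (subst integral_distr[OF f g']) (simp add: case_prod_beta)
qed


lemma meas11: "(\<lambda>z. fst z powi 1 * snd z powi 1) \<in> borel_measurable (borel \<Otimes>\<^sub>M (borel :: complex measure))"
proof -
  have "(\<lambda>z. fst z * snd z) \<in> borel_measurable (borel \<Otimes>\<^sub>M (borel :: complex measure))"
    by measurable
  then show ?thesis by simp
qed

lemma meas1m1: "(\<lambda>z. fst z powi 1 * snd z powi (-1)) \<in> borel_measurable (borel \<Otimes>\<^sub>M (borel :: complex measure))"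
proof -
  have "(\<lambda>z. fst z * inverse (snd z)) \<in> borel_measurable (borel \<Otimes>\<^sub>M (borel :: complex measure))"
    by measurable
  then show ?thesis by (simp add: power_int_minus)
qed

lemma star_mom_a:
  assumes "PT2 \<nu>"
  shows "mom 1 1 (star_meas \<nu>) = mom 1 (-1) \<nu>"
  using star_mom[OF assms meas11] by (simp add: mom_def power_int_minus)

lemma star_mom_b:
  assumes "PT2 \<nu>"
  shows "mom 1 (-1) (star_meas \<nu>) = mom 1 1 \<nu>"
  using star_mom[OF assms meas1m1] by (simp add: mom_def power_int_minus)

theorem lemma3p2:
  fixes \<nu>1 \<nu>2 \<nu> \<mu> :: "(complex \<times> complex) measure"
  assumes "PT2 \<nu>1" and "PT2 \<nu>2"
  shows "(bfmc_realizes TYPE('a::ring_1) TYPE('b) \<nu>1 \<nu>2 \<nu> \<longrightarrow>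
            mom 1 1 \<nu> = mom 1 1 \<nu>1 * mom 1 1 \<nu>2) \<and>
         (bfmc_realizes TYPE('c::ring_1) TYPE('d) (star_meas \<nu>1) (star_meas \<nu>2) \<mu> \<longrightarrow>
            mom 1 (-1) (star_meas \<mu>) = mom 1 (-1) \<nu>1 * mom 1 (-1) \<nu>2)"
proof (intro conjI impI)
  assume "bfmc_realizes TYPE('a::ring_1) TYPE('b) \<nu>1 \<nu>2 \<nu>"
  then show "mom 1 1 \<nu> = mom 1 1 \<nu>1 * mom 1 1 \<nu>2" by (rule bfmc_mom11)
next
  assume R: "bfmc_realizes TYPE('c::ring_1) TYPE('d) (star_meas \<nu>1) (star_meas \<nu>2) \<mu>"
  then have m: "mom 1 1 \<mu> = mom 1 1 (star_meas \<nu>1) * mom 1 1 (star_meas \<nu>2)" by (rule bfmc_mom11)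
  from R have "PT2 \<mu>" unfolding bfmc_realizes_def distribution_of_def by blast
  then show "mom 1 (-1) (star_meas \<mu>) = mom 1 (-1) \<nu>1 * mom 1 (-1) \<nu>2"
    using m star_mom_a[OF assms(1)] star_mom_a[OF assms(2)] star_mom_b by simp
qed

end
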